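(* The symmetric reciprocal cataclysmic quarrel rule is supremely non-monotonic: for every integer $k\ge0$ there exist $n\ge2$, distinct players $i,j\in[n]$ and a monotonic game $\mathcal W$ on $[n]$ such that the game $\hat{\mathcal W}$ obtained by imposing a symmetric reciprocal cataclysmic quarrel between $i$ and $j$ is not $k$-monotonic.
   Context: Players are $[n]=\{1,\dots,n\}$. A binary voting game on $[n]$ is identified with its collection $\mathcal W\subseteq 2^{[n]}$ of winning sets ($S\in\mathcal W$ means the division in which exactly the members of $S$ vote YES has outcome YES). It is monotonic if $T\subseteq S$ and $T\in\mathcal W$ imply $S\in\mathcal W$. For an integer $k\ge0$, a game $\mathcal W$ is $k$-monotonic if for every $S\subseteq[n]$ with $S\notin\mathcal W$ and every proper subset $T\subsetneq S$ there exists $K$ with $|K|\le k$ such that $T\setminus K\notin\mathcal W$. Symmetric reciprocal cataclysmic quarrel between $i$ and $j$: for every $S\subseteq[n]\setminus\{i,j\}$, $S\cup\{i,j\}\in\hat{\mathcal W}\iff \emptyset\in\mathcal W$; $S\in\hat{\mathcal W}\iff [n]\in\mathcal W$; $S\cup\{i\}\in\hat{\mathcal W}\iff S\cup\{i\}\in\mathcal W$; $S\cup\{j\}\in\hat{\mathcal W}\iff S\cup\{j\}\in\mathcal W$. *)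

theory Defs
  imports Main
begin

definition is_game :: "nat \<Rightarrow> nat set set \<Rightarrow> bool" where
  "is_game n W \<longleftrightarrow> W \<subseteq> Pow {1..n}"

definition monotonic :: "nat \<Rightarrow> nat set set \<Rightarrow> bool" where
  "monotonic n W \<longleftrightarrow> (\<forall>S T. S \<subseteq> {1..n} \<longrightarrow> T \<subseteq> S \<longrightarrow> T \<in> W \<longrightarrow> S \<in> W)"

definition k_monotonic :: "nat \<Rightarrow> nat \<Rightarrow> nat set set \<Rightarrow> bool" where
  "k_monotonic n k W \<longleftrightarrow>
     (\<forall>S. S \<subseteq> {1..n} \<longrightarrow> S \<notin> W \<longrightarrow>
        (\<forall>T. T \<subset> S \<longrightarrow> (\<exists>K. K \<subseteq> {1..n} \<and> card K \<le> k \<and> T - K \<notin> W)))"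

definition sym_rec_cat_quarrel :: "nat \<Rightarrow> nat \<Rightarrow> nat \<Rightarrow> nat set set \<Rightarrow> nat set set" where
  "sym_rec_cat_quarrel n i j W =
     {S. S \<subseteq> {1..n} \<and>
        (if i \<in> S \<and> j \<in> S then {} \<in> W
         else if i \<notin> S \<and> j \<notin> S then {1..n} \<in> W
         else S \<in> W)}"

end

theory Submission
  imports Defs
begin

lemma sub1: "A \<subseteq> {1::nat} \<Longrightarrow> A = {} \<or> A = {1}" by blast

theorem theorem10:
  shows "\<forall>k::nat. \<exists>n\<ge>2. \<exists>i j. i \<in> {1..n} \<and> j \<in> {1..n} \<and> i \<noteq> j \<and>
           (\<exists>W. is_game n W \<and> monotonic n W \<and>
                \<not> k_monotonic n k (sym_rec_cat_quarrel n i j W))"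
proof
  fix k :: nat
  define W where "W = {S. S \<subseteq> {1..(2::nat)} \<and> S \<noteq> {}}"
  have g: "is_game 2 W" unfolding is_game_def W_def by auto
  have m: "monotonic 2 W" unfolding monotonic_def W_def by auto
  have S: "{1,2} \<notin> sym_rec_cat_quarrel 2 1 2 W"
    unfolding sym_rec_cat_quarrel_def W_def by auto
  have T: "\<forall>K. {1::nat} - K \<in> sym_rec_cat_quarrel 2 1 2 W"
  proof
    fix K
    have "{1::nat} - K \<subseteq> {1}" by blast
    then consider "{1::nat} - K = {}" | "{1::nat} - K = {1}" using sub1 by blast
    then show "{1::nat} - K \<in> sym_rec_cat_quarrel 2 1 2 W"
      by cases (auto simp: sym_rec_cat_quarrel_def W_def)
  qed
  have "\<not> k_monotonic 2 k (sym_rec_cat_quarrel 2 1 2 W)"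
    unfolding k_monotonic_def
  proof
    assume h: "\<forall>S. S \<subseteq> {1..2} \<longrightarrow> S \<notin> sym_rec_cat_quarrel 2 1 2 W \<longrightarrow>
        (\<forall>T. T \<subset> S \<longrightarrow> (\<exists>K. K \<subseteq> {1..2} \<and> card K \<le> k \<and> T - K \<notin> sym_rec_cat_quarrel 2 1 2 W))"
    have "{1::nat,2} \<subseteq> {1..2}" by auto
    moreover have "{1::nat} \<subset> {1,2}" by auto
    ultimately show False using h S T by blast
  qed
  then show "\<exists>n\<ge>2. \<exists>i j. i \<in> {1..n} \<and> j \<in> {1..n} \<and> i \<noteq> j \<and>
           (\<exists>W. is_game n W \<and> monotonic n W \<and>
                \<not> k_monotonic n k (sym_rec_cat_quarrel n i j W))"
    using g m by (intro exI[of _ 2] conjI exI[of _ 1] exI[of _ 2]) auto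
qed

end
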